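(* Let $p\in(0,1)$ and $\varepsilon>0$. Let $n<m$ be positive integers with $b=n/m$. With probability $1-\exp(-\Omega_\varepsilon(n))$, a random linear rank metric code $\mathcal{C}\subseteq\mathbb{F}_2^{m\times n}$ of rate $R=(1-p)(1-bp)-\varepsilon$ satisfies $S_{\mathcal{C}}\le2$.
   Context: $\mathcal{B}_R(X,pn)=\{Z\in\mathbb{F}_2^{m\times n}:\mathrm{rank}(X-Z)\le pn\}$; $L_{\mathcal{C}}(X)=|\mathcal{B}_R(X,pn)\cap\mathcal{C}|$; $A_{\mathcal{C}}(X)=2^{\frac{\varepsilon}{1+\varepsilon}nL_{\mathcal{C}}(X)}$; $S_{\mathcal{C}}=\mathbb{E}_{X\sim\mathbb{F}_2^{m\times n}}[A_{\mathcal{C}}(X)]$ ($X$ uniform). A random linear rank metric code of rate $R$ is $\mathrm{span}_{\mathbb{F}_2}(Y_1,\dots,Y_k)$ with $k=Rmn$ (an integer) and $Y_i$ independent uniform in $\mathbb{F}_2^{m\times n}$. The statement is for $m,n$ sufficiently large. *)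

theory Defs
  imports Complex_Main "HOL-Library.Z2" "Jordan_Normal_Form.DL_Rank"
begin

text \<open>Matrices over F_2 are JNF matrices over the two-element field bit.
  F_2^{m x n} is carrier_mat m n (m rows, n columns).\<close>

definition mats :: "nat \<Rightarrow> nat \<Rightarrow> bit mat set" where
  "mats m n = carrier_mat m n"

definition rank2 :: "nat \<Rightarrow> bit mat \<Rightarrow> nat" where
  "rank2 m A = vec_space.rank m A"

definition rank_ball :: "nat \<Rightarrow> nat \<Rightarrow> real \<Rightarrow> bit mat \<Rightarrow> bit mat set" where
  "rank_ball m n p X = {Z \<in> mats m n. real (rank2 m (X - Z)) \<le> p * real n}"

definition list_size :: "nat \<Rightarrow> nat \<Rightarrow> real \<Rightarrow> bit mat set \<Rightarrow> bit mat \<Rightarrow> nat" where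
  "list_size m n p C X = card (rank_ball m n p X \<inter> C)"

definition A_C :: "nat \<Rightarrow> nat \<Rightarrow> real \<Rightarrow> real \<Rightarrow> bit mat set \<Rightarrow> bit mat \<Rightarrow> real" where
  "A_C m n p \<epsilon> C X = 2 powr (\<epsilon> / (1 + \<epsilon>) * real n * real (list_size m n p C X))"

definition S_C :: "nat \<Rightarrow> nat \<Rightarrow> real \<Rightarrow> real \<Rightarrow> bit mat set \<Rightarrow> real" where
  "S_C m n p \<epsilon> C = (\<Sum>X\<in>mats m n. A_C m n p \<epsilon> C X) / real (card (mats m n))"

definition span_code :: "nat \<Rightarrow> nat \<Rightarrow> nat \<Rightarrow> (nat \<Rightarrow> bit mat) \<Rightarrow> bit mat set" where
  "span_code m n k Y = {mat m n (\<lambda>(i,j). \<Sum>l<k. c l * (Y l $$ (i,j))) | c :: nat \<Rightarrow> bit. True}"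

text \<open>Sample space of k independent uniform generators, and probability of an event.\<close>
definition gens :: "nat \<Rightarrow> nat \<Rightarrow> nat \<Rightarrow> (nat \<Rightarrow> bit mat) set" where
  "gens m n k = PiE {..<k} (\<lambda>_. mats m n)"

definition rlc_prob :: "nat \<Rightarrow> nat \<Rightarrow> nat \<Rightarrow> (bit mat set \<Rightarrow> bool) \<Rightarrow> real" where
  "rlc_prob m n k P =
     real (card {Y \<in> gens m n k. P (span_code m n k Y)}) / real (card (gens m n k))"

end

theory Submission
  imports Defs "HOL-Library.Function_Algebras"
begin

declare add_bit_eq_xor[simp del] mult_bit_eq_and[simp del]

type_synonym bv = "nat \<Rightarrow> bit"

lemma bit_add_self[simp]: "(x::bit) + x = 0" by (cases x) simp_all

lemma bv_add_self: "(x::bv) + x = 0"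
  by (rule ext) simp

lemma bv_sum_apply: "(\<Sum>i\<in>A. (f i :: bv)) x = (\<Sum>i\<in>A. f i x)"
proof (cases "finite A")
  case True then show ?thesis by (induction A rule: finite_induct) auto
qed simp

definition spanS :: "bv set \<Rightarrow> bv set" where "spanS F = (\<lambda>I. \<Sum>I) ` Pow F"
definition indep :: "bv set \<Rightarrow> bool" where "indep F = (\<forall>I\<subseteq>F. I \<noteq> {} \<longrightarrow> \<Sum>I \<noteq> 0)"

lemma card_spanS: "finite F \<Longrightarrow> card (spanS F) \<le> 2 ^ card F"
  unfolding spanS_def by (metis card_Pow card_image_le finite_Pow_iff)

lemma finite_spanS: "finite F \<Longrightarrow> finite (spanS F)"
  unfolding spanS_def by simp

lemma indep_subset: "indep F \<Longrightarrow> G \<subseteq> F \<Longrightarrow> indep G"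
  unfolding indep_def by blast

lemma spanS_mono: "F \<subseteq> G \<Longrightarrow> spanS F \<subseteq> spanS G"
  unfolding spanS_def by auto

lemma in_spanS: "x \<in> F \<Longrightarrow> x \<in> spanS F"
  unfolding spanS_def by (rule image_eqI[of _ _ "{x}"]) auto

lemma indep_insert:
  assumes "indep F" "x \<notin> spanS F" "finite F"
  shows "indep (insert x F)"
  unfolding indep_def
proof (intro allI impI)
  fix I assume I: "I \<subseteq> insert x F" "I \<noteq> {}"
  show "\<Sum>I \<noteq> 0"
  proof (cases "x \<in> I")
    case False
    then show ?thesis using I assms(1) unfolding indep_def by blast
  next
    case True
    have fin: "finite I" using I assms(3) finite_subset by auto
    have "\<Sum>I = x + \<Sum>(I - {x})" using True fin by (simp add: sum.remove)
    moreover have "I - {x} \<subseteq> F" using I by auto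
    hence "\<Sum>(I - {x}) \<in> spanS F" unfolding spanS_def by auto
    moreover have "x + y = 0 \<Longrightarrow> x = y" for y :: bv
      by (metis add.assoc add.right_neutral bv_add_self add.commute)
    ultimately show ?thesis using assms(2) by metis
  qed
qed

lemma exists_basis: "finite S \<Longrightarrow> \<exists>F\<subseteq>S. indep F \<and> S \<subseteq> spanS F"
proof (induction S rule: finite_induct)
  case empty
  then show ?case by (auto simp: indep_def)
next
  case (insert x S)
  then obtain F where F: "F \<subseteq> S" "indep F" "S \<subseteq> spanS F" by blast
  have fF: "finite F" using F(1) insert(1) finite_subset by blast
  show ?case
  proof (cases "x \<in> spanS F")
    case True
    then show ?thesis using F by blast
  next
    case False
    have "indep (insert x F)" using indep_insert[OF F(2) False fF] .
    moreover have "insert x S \<subseteq> spanS (insert x F)"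
      using F(3) spanS_mono[of F "insert x F"] in_spanS[of x "insert x F"] by auto
    ultimately show ?thesis using F(1) by blast
  qed
qed

lemma big_has_indep:
  assumes "finite S" "2 ^ l \<le> card S"
  shows "\<exists>F\<subseteq>S. indep F \<and> card F = l"
proof -
  obtain F where F: "F \<subseteq> S" "indep F" "S \<subseteq> spanS F" using exists_basis[OF assms(1)] by blast
  have fF: "finite F" using F(1) assms(1) finite_subset by blast
  have "card S \<le> card (spanS F)" using card_mono[OF finite_spanS[OF fF] F(3)] .
  also have "\<dots> \<le> 2 ^ card F" using card_spanS[OF fF] .
  finally have "(2::nat) ^ l \<le> 2 ^ card F" using assms(2) by linarith
  hence "l \<le> card F" by simp
  then obtain G where "G \<subseteq> F" "card G = l" by (meson obtain_subset_with_card_n)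
  then show ?thesis using F indep_subset by blast
qed

definition chi :: "bit \<Rightarrow> real" where "chi x = (if x = 0 then 1 else -1)"

lemma chi_add: "chi (x + y) = chi x * chi y"
  by (cases x; cases y) (simp_all add: chi_def)

lemma chi_zero[simp]: "chi 0 = 1" by (simp add: chi_def)

lemma chi_sum: "chi (\<Sum>a\<in>A. f a) = (\<Prod>a\<in>A. chi (f a))"
proof (cases "finite A")
  case True then show ?thesis
  proof (induction A rule: finite_induct)
    case (insert x F)
    show ?case by (simp only: sum.insert[OF insert(1,2)] prod.insert[OF insert(1,2)] chi_add insert(3))
  qed simp
qed simp

lemma UNIV_bit: "(UNIV :: bit set) = {0, 1}"
  by (auto intro: bit.exhaust)

lemma finite_UNIV_bit[simp]: "finite (UNIV :: bit set)" by (simp add: UNIV_bit)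
lemma card_UNIV_bit': "card (UNIV :: bit set) = 2" by (simp add: UNIV_bit)

definition ents :: "nat \<Rightarrow> nat \<Rightarrow> (nat \<times> nat) set" where "ents m n = {..<m} \<times> {..<n}"

lemma finite_ents[simp]: "finite (ents m n)" by (simp add: ents_def)
lemma card_ents: "card (ents m n) = m * n" by (simp add: ents_def)

lemma mats_bij: "bij_betw (\<lambda>M. restrict (\<lambda>e. M $$ e) (ents m n)) (mats m n) (PiE (ents m n) (\<lambda>_. UNIV))"
proof (rule bij_betw_byWitness[where f' = "\<lambda>f. mat m n f"])
  show "\<forall>a\<in>mats m n. mat m n (restrict (($$) a) (ents m n)) = a"
    by (auto simp: mats_def ents_def intro!: eq_matI)
  show "\<forall>a'\<in>PiE (ents m n) (\<lambda>_. UNIV). restrict (($$) (mat m n a')) (ents m n) = a'"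
  proof
    fix f assume f: "f \<in> PiE (ents m n) (\<lambda>_. UNIV)"
    show "restrict (($$) (mat m n f)) (ents m n) = f"
    proof (rule ext)
      fix e show "restrict (($$) (mat m n f)) (ents m n) e = f e"
        using f by (cases e) (auto simp: ents_def PiE_def extensional_def)
    qed
  qed
  show "(\<lambda>M. restrict (($$) M) (ents m n)) ` mats m n \<subseteq> PiE (ents m n) (\<lambda>_. UNIV)" by auto
  show "(\<lambda>f. mat m n f) ` PiE (ents m n) (\<lambda>_. UNIV) \<subseteq> mats m n" by (auto simp: mats_def)
qed

lemma finite_mats[simp]: "finite (mats m n)"
  using bij_betw_finite[OF mats_bij] finite_PiE[of "ents m n" "\<lambda>_. UNIV :: bit set"] by simp

lemma card_mats: "card (mats m n) = 2 ^ (m * n)"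
proof -
  have "card (mats m n) = card (PiE (ents m n) (\<lambda>_. UNIV :: bit set))"
    using bij_betw_same_card[OF mats_bij] .
  also have "\<dots> = 2 ^ (m * n)"
    by (simp add: card_PiE card_ents card_UNIV_bit')
  finally show ?thesis .
qed

lemma chi_plus_one: "chi (x + 1) = - chi x"
  by (cases x) (simp_all add: chi_def)

lemma char_sum_mats:
  fixes w :: "nat \<times> nat \<Rightarrow> bit"
  shows "(\<Sum>M\<in>mats m n. chi (\<Sum>e\<in>ents m n. w e * M $$ e))
       = (if \<forall>e\<in>ents m n. w e = 0 then real (card (mats m n)) else 0)"
proof (cases "\<forall>e\<in>ents m n. w e = 0")
  case True
  then show ?thesis by simp
next
  case False
  then obtain e0 where e0: "e0 \<in> ents m n" "w e0 = 1" by auto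
  define fl where "fl M = mat m n (\<lambda>e. if e = e0 then M $$ e + 1 else M $$ e)" for M :: "bit mat"
  define h where "h M = chi (\<Sum>e\<in>ents m n. w e * M $$ e)" for M :: "bit mat"
  have fl_in: "fl M \<in> mats m n" for M by (simp add: fl_def mats_def)
  have fl_idx: "e \<in> ents m n \<Longrightarrow> fl M $$ e = M $$ e + (if e = e0 then 1 else 0)" for M e
    by (cases e) (auto simp: fl_def ents_def)
  have fl_fl: "M \<in> mats m n \<Longrightarrow> fl (fl M) = M" for M
    by (rule eq_matI) (auto simp: fl_def mats_def add.assoc)
  have bij: "bij_betw fl (mats m n) (mats m n)"
    by (rule bij_betw_byWitness[where f'=fl]) (use fl_fl fl_in in auto)
  have h_fl: "h (fl M) = - h M" for M
  proof -
    have "(\<Sum>e\<in>ents m n. w e * fl M $$ e) = (\<Sum>e\<in>ents m n. w e * M $$ e + (if e = e0 then w e else 0))"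
      by (rule sum.cong) (auto simp: fl_idx distrib_left)
    also have "\<dots> = (\<Sum>e\<in>ents m n. w e * M $$ e) + (\<Sum>e\<in>ents m n. if e = e0 then w e else 0)"
      by (rule sum.distrib)
    also have "(\<Sum>e\<in>ents m n. if e = e0 then w e else 0) = 1"
      by (simp only: sum.delta[OF finite_ents] e0 if_True)
    finally show ?thesis unfolding h_def by (simp only: chi_plus_one)
  qed
  have "sum h (mats m n) = (\<Sum>M\<in>mats m n. h (fl M))"
    using sum.reindex_bij_betw[OF bij, of h] by simp
  also have "\<dots> = - sum h (mats m n)" by (simp add: h_fl sum_negf)
  finally have "sum h (mats m n) = 0" by simp
  with False show ?thesis unfolding h_def by (simp only: if_False)
qed

definition comb :: "nat \<Rightarrow> nat \<Rightarrow> nat \<Rightarrow> bv \<Rightarrow> (nat \<Rightarrow> bit mat) \<Rightarrow> bit mat" where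
  "comb m n k c Y = mat m n (\<lambda>(i,j). \<Sum>l<k. c l * (Y l $$ (i,j)))"

lemma span_code_comb: "span_code m n k Y = range (\<lambda>c. comb m n k c Y)"
  unfolding span_code_def comb_def by auto

lemma comb_in[simp]: "comb m n k c Y \<in> mats m n"
  by (simp add: comb_def mats_def)

lemma comb_idx: "e \<in> ents m n \<Longrightarrow> comb m n k c Y $$ e = (\<Sum>l<k. c l * (Y l $$ e))"
  by (cases e) (auto simp: comb_def ents_def)

lemma mats_eq_iff: "A \<in> mats m n \<Longrightarrow> B \<in> mats m n \<Longrightarrow> A = B \<longleftrightarrow> (\<forall>e\<in>ents m n. A $$ e = B $$ e)"
  by (auto simp: mats_def ents_def intro!: eq_matI)

lemma bit_eq_iff_add: "(a::bit) = b \<longleftrightarrow> a + b = 0"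
  by (cases a; cases b) simp_all

lemma ind_chi: "(if (x::bit) = 0 then 1 else 0) = (chi x + 1) / (2::real)"
  by (cases x) (simp_all add: chi_def)

lemma prod_indicator: "finite P \<Longrightarrow> (\<Prod>p\<in>P. (if Q p then 1 else 0 :: real)) = (if \<forall>p\<in>P. Q p then 1 else 0)"
  by (induction P rule: finite_induct) auto

lemma finite_gens[simp]: "finite (gens m n k)"
  by (simp add: gens_def finite_PiE)

lemma card_gens: "card (gens m n k) = card (mats m n) ^ k"
  by (simp add: gens_def card_PiE)

lemma card_filter_sum: "finite A \<Longrightarrow> real (card {x\<in>A. Q x}) = (\<Sum>x\<in>A. if Q x then 1 else 0)"
  by (simp add: sum.If_cases Int_def)

lemma sum_if_mult: "(\<Sum>v\<in>F. if Q v then a v * (b::bit) else 0) = (\<Sum>v\<in>F. if Q v then a v else 0) * b"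
  by (subst sum_distrib_right) (rule sum.cong, auto)

lemma test1: "(\<Sum>e\<in>E. \<Sum>v\<in>F. if (v, e) \<in> I then v l * ((Y l :: bit mat) $$ e) else 0) =
     (\<Sum>e\<in>E. (\<Sum>v\<in>F. if (v, e) \<in> I then v l else 0) * (Y l $$ e))"
  by (simp only: sum_if_mult)

lemma regroup:
  fixes F :: "bv set" and Y :: "nat \<Rightarrow> bit mat"
  assumes "finite F" "I \<subseteq> F \<times> ents m n"
  shows "(\<Sum>p\<in>I. (\<Sum>l<k. fst p l * (Y l $$ snd p)))
       = (\<Sum>l<k. \<Sum>e\<in>ents m n. (\<Sum>v\<in>F. if (v,e) \<in> I then v l else 0) * (Y l $$ e))"
proof -
  have "(\<Sum>p\<in>I. (\<Sum>l<k. fst p l * (Y l $$ snd p))) = (\<Sum>l<k. \<Sum>p\<in>I. fst p l * (Y l $$ snd p))"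
    by (rule sum.swap)
  also have "\<dots> = (\<Sum>l<k. \<Sum>e\<in>ents m n. (\<Sum>v\<in>F. if (v,e) \<in> I then v l else 0) * (Y l $$ e))"
  proof (rule sum.cong[OF refl])
    fix l
    have fP: "finite (F \<times> ents m n)" using assms(1) by simp
    have "(\<Sum>p\<in>I. fst p l * (Y l $$ snd p)) = (\<Sum>p\<in>F \<times> ents m n. if p \<in> I then fst p l * (Y l $$ snd p) else 0)"
      using sum.inter_restrict[OF fP, of "\<lambda>p. fst p l * (Y l $$ snd p)" I] assms(2)
      by (simp add: Int_absorb1)
    also have "\<dots> = (\<Sum>v\<in>F. \<Sum>e\<in>ents m n. if (v,e) \<in> I then v l * (Y l $$ e) else 0)"
      by (simp add: sum.cartesian_product split_beta)
    also have "\<dots> = (\<Sum>e\<in>ents m n. \<Sum>v\<in>F. if (v,e) \<in> I then v l * (Y l $$ e) else 0)"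
      by (rule sum.swap)
    also have "\<dots> = (\<Sum>e\<in>ents m n. (\<Sum>v\<in>F. if (v,e) \<in> I then v l else 0) * (Y l $$ e))"
      by (simp only: sum_if_mult)
    finally show "(\<Sum>p\<in>I. fst p l * (Y l $$ snd p)) = \<dots>" .
  qed
  finally show ?thesis .
qed

lemma char_Y:
  fixes F :: "bv set"
  assumes fin: "finite F" and sup: "\<forall>v\<in>F. \<forall>l\<ge>k. v l = 0" and ind: "indep F"
    and I: "I \<subseteq> F \<times> ents m n"
  shows "(\<Sum>Y\<in>gens m n k. chi (\<Sum>l<k. \<Sum>e\<in>ents m n. (\<Sum>v\<in>F. if (v,e)\<in>I then v l else 0) * (Y l $$ e)))
       = (if I = {} then real (card (gens m n k)) else 0)"
proof -
  define W where "W l e = (\<Sum>v\<in>F. if (v,e)\<in>I then v l else 0)" for l e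
  have "(\<Sum>Y\<in>gens m n k. chi (\<Sum>l<k. \<Sum>e\<in>ents m n. W l e * (Y l $$ e)))
      = (\<Sum>Y\<in>gens m n k. \<Prod>l<k. chi (\<Sum>e\<in>ents m n. W l e * (Y l $$ e)))"
    by (simp only: chi_sum)
  also have "\<dots> = (\<Prod>l<k. \<Sum>M\<in>mats m n. chi (\<Sum>e\<in>ents m n. W l e * (M $$ e)))"
    unfolding gens_def by (rule prod_sum_PiE[symmetric]) auto
  also have "\<dots> = (\<Prod>l<k. if \<forall>e\<in>ents m n. W l e = 0 then real (card (mats m n)) else 0)"
    by (simp only: char_sum_mats)
  also have "\<dots> = (if I = {} then real (card (gens m n k)) else 0)"
  proof (cases "I = {}")
    case True
    then show ?thesis by (simp add: W_def card_gens)
  next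
    case False
    then obtain v0 e0 where ve: "(v0, e0) \<in> I" by auto
    define Ie where "Ie = {v\<in>F. (v,e0)\<in>I}"
    have "Ie \<subseteq> F" "Ie \<noteq> {}" using ve I by (auto simp: Ie_def)
    hence "\<Sum>Ie \<noteq> 0" using ind unfolding indep_def by blast
    then obtain l where l: "(\<Sum>Ie) l \<noteq> 0"
      by (metis (full_types) zero_fun_def ext)
    have Wl: "W l e0 = (\<Sum>Ie) l"
      unfolding W_def Ie_def bv_sum_apply using fin by (simp add: sum.inter_filter)
    have "l < k"
    proof (rule ccontr)
      assume "\<not> l < k"
      hence "\<forall>v\<in>Ie. v l = 0" using sup \<open>Ie \<subseteq> F\<close> by auto
      hence "(\<Sum>Ie) l = 0" unfolding bv_sum_apply by simp
      with l show False by simp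
    qed
    have "e0 \<in> ents m n" using ve I by auto
    hence Z: "(if \<forall>e\<in>ents m n. W l e = 0 then real (card (mats m n)) else 0) = 0"
      using Wl l by auto
    have "(\<Prod>l<k. if \<forall>e\<in>ents m n. W l e = 0 then real (card (mats m n)) else 0) = 0"
      by (rule prod_zero, simp, rule bexI[of _ l], rule Z, simp add: \<open>l < k\<close>)
    with False show ?thesis by simp
  qed
  finally show ?thesis unfolding W_def .
qed

lemma unif:
  fixes F :: "bv set" and T :: "bv \<Rightarrow> bit mat"
  assumes fin: "finite F" and sup: "\<forall>v\<in>F. \<forall>l\<ge>k. v l = 0" and ind: "indep F"
    and T: "\<forall>v\<in>F. T v \<in> mats m n"
  shows "real (card {Y\<in>gens m n k. \<forall>v\<in>F. comb m n k v Y = T v})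
       = real (card (gens m n k)) / 2 ^ (card F * (m * n))"
proof -
  let ?G = "gens m n k"
  let ?P = "F \<times> ents m n"
  have fP: "finite ?P" using fin by simp
  define d where "d p Y = (\<Sum>l<k. fst p l * (Y l $$ snd p)) + T (fst p) $$ snd p" for p Y
  have eq: "(\<forall>v\<in>F. comb m n k v Y = T v) \<longleftrightarrow> (\<forall>p\<in>?P. d p Y = 0)" for Y
  proof -
    have "(\<forall>v\<in>F. comb m n k v Y = T v) \<longleftrightarrow> (\<forall>v\<in>F. \<forall>e\<in>ents m n. comb m n k v Y $$ e = T v $$ e)"
      using mats_eq_iff[OF comb_in] T by blast
    also have "\<dots> \<longleftrightarrow> (\<forall>p\<in>?P. d p Y = 0)"
      by (auto simp: comb_idx d_def bit_eq_iff_add[symmetric])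
    finally show ?thesis .
  qed
  have "real (card {Y\<in>?G. \<forall>v\<in>F. comb m n k v Y = T v})
      = (\<Sum>Y\<in>?G. if \<forall>p\<in>?P. d p Y = 0 then 1 else 0)"
    by (simp only: card_filter_sum[OF finite_gens] eq)
  also have "\<dots> = (\<Sum>Y\<in>?G. \<Prod>p\<in>?P. (chi (d p Y) + 1) / 2)"
    by (simp only: prod_indicator[OF fP, symmetric] ind_chi)
  also have "\<dots> = (\<Sum>Y\<in>?G. (1/2) ^ card ?P * (\<Sum>I\<in>Pow ?P. \<Prod>p\<in>I. chi (d p Y)))"
  proof (rule sum.cong[OF refl])
    fix Y
    have "(\<Prod>p\<in>?P. (chi (d p Y) + 1) / 2) = (\<Prod>p\<in>?P. chi (d p Y) + 1) / 2 ^ card ?P"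
      by (simp add: prod_dividef)
    also have "(\<Prod>p\<in>?P. chi (d p Y) + 1) = (\<Sum>I\<in>Pow ?P. \<Prod>p\<in>I. chi (d p Y))"
      using prod_add[OF fP, of "\<lambda>p. chi (d p Y)" "\<lambda>_. 1"] by simp
    finally show "(\<Prod>p\<in>?P. (chi (d p Y) + 1) / 2) = (1/2) ^ card ?P * (\<Sum>I\<in>Pow ?P. \<Prod>p\<in>I. chi (d p Y))"
      by (simp add: divide_simps)
  qed
  also have "\<dots> = (1/2) ^ card ?P * (\<Sum>I\<in>Pow ?P. \<Sum>Y\<in>?G. \<Prod>p\<in>I. chi (d p Y))"
    by (simp add: sum_distrib_left sum.swap[of _ ?G])
  also have "(\<Sum>I\<in>Pow ?P. \<Sum>Y\<in>?G. \<Prod>p\<in>I. chi (d p Y)) = (\<Sum>I\<in>Pow ?P. if I = {} then real (card ?G) else 0)"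
  proof (rule sum.cong[OF refl])
    fix I assume "I \<in> Pow ?P"
    hence I: "I \<subseteq> ?P" by simp
    have fI: "finite I" using I fP finite_subset by blast
    have "(\<Sum>Y\<in>?G. \<Prod>p\<in>I. chi (d p Y))
        = (\<Sum>Y\<in>?G. chi (\<Sum>p\<in>I. T (fst p) $$ snd p) *
              chi (\<Sum>l<k. \<Sum>e\<in>ents m n. (\<Sum>v\<in>F. if (v,e)\<in>I then v l else 0) * (Y l $$ e)))"
    proof (rule sum.cong[OF refl])
      fix Y
      have "(\<Prod>p\<in>I. chi (d p Y)) = chi (\<Sum>p\<in>I. d p Y)" by (simp only: chi_sum)
      also have "(\<Sum>p\<in>I. d p Y) = (\<Sum>p\<in>I. T (fst p) $$ snd p) + (\<Sum>p\<in>I. (\<Sum>l<k. fst p l * (Y l $$ snd p)))"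
        unfolding d_def by (simp add: sum.distrib add.commute)
      also have "(\<Sum>p\<in>I. (\<Sum>l<k. fst p l * (Y l $$ snd p)))
          = (\<Sum>l<k. \<Sum>e\<in>ents m n. (\<Sum>v\<in>F. if (v,e)\<in>I then v l else 0) * (Y l $$ e))"
        by (rule regroup[OF fin I])
      finally show "(\<Prod>p\<in>I. chi (d p Y)) = chi (\<Sum>p\<in>I. T (fst p) $$ snd p) *
              chi (\<Sum>l<k. \<Sum>e\<in>ents m n. (\<Sum>v\<in>F. if (v,e)\<in>I then v l else 0) * (Y l $$ e))"
        by (simp only: chi_add)
    qed
    also have "\<dots> = chi (\<Sum>p\<in>I. T (fst p) $$ snd p) * (if I = {} then real (card ?G) else 0)"
      by (simp only: sum_distrib_left[symmetric] char_Y[OF fin sup ind I])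
    also have "\<dots> = (if I = {} then real (card ?G) else 0)" by simp
    finally show "(\<Sum>Y\<in>?G. \<Prod>p\<in>I. chi (d p Y)) = (if I = {} then real (card ?G) else 0)" .
  qed
  also have "\<dots> = real (card ?G)"
    using sum.delta[of "Pow ?P" "{}" "\<lambda>_. real (card ?G)"] fP by simp
  finally show ?thesis
    by (simp add: card_cartesian_product card_ents power_one_over divide_simps)
qed

definition colf :: "nat \<Rightarrow> bit mat \<Rightarrow> nat \<Rightarrow> bv" where
  "colf m A j = (\<lambda>i. if i < m then A $$ (i,j) else 0)"

lemma link_rank:
  assumes A: "A \<in> mats m n" and J: "J \<subseteq> {..<n}" and inj: "inj_on (colf m A) J"
    and ind: "indep (colf m A ` J)"
  shows "card J \<le> rank2 m A"
proof -
  interpret V: vec_space "TYPE(bit)" m .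
  have Ac: "A \<in> carrier_mat m n" using A by (simp add: mats_def)
  define U where "U = col A ` J"
  have injc: "inj_on (col A) J"
  proof (rule inj_onI)
    fix x y assume "x \<in> J" "y \<in> J" "col A x = col A y"
    have "colf m A x = colf m A y"
    proof (rule ext)
      fix i show "colf m A x i = colf m A y i"
      proof (cases "i < m")
        case True
        have "A $$ (i,x) = col A x $ i" using True Ac \<open>x \<in> J\<close> J by auto
        also have "\<dots> = col A y $ i" using \<open>col A x = col A y\<close> by simp
        also have "\<dots> = A $$ (i,y)" using True Ac \<open>y \<in> J\<close> J by auto
        finally show ?thesis using True by (simp add: colf_def)
      qed (simp add: colf_def)
    qed
    thus "x = y" using inj \<open>x \<in> J\<close> \<open>y \<in> J\<close> by (auto dest: inj_onD)
  qed
  have cardU: "card U = card J" unfolding U_def using card_image[OF injc] .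
  have Usub: "U \<subseteq> set (cols A)" unfolding U_def using J Ac by (auto simp: cols_def)
  have Ucar: "U \<subseteq> carrier_vec m" unfolding U_def using Ac by auto
  have li: "\<not> V.lin_dep U"
  proof
    assume "V.lin_dep U"
    then obtain B a v where B: "finite B" "B \<subseteq> U" "V.lincomb a B = 0\<^sub>v m" "v \<in> B" "a v \<noteq> 0"
      unfolding V.lin_dep_def by auto
    define I where "I = {j\<in>J. col A j \<in> B \<and> a (col A j) = 1}"
    have IJ: "I \<subseteq> J" unfolding I_def by auto
    have "I \<noteq> {}" using B unfolding I_def U_def by auto
    have sumz: "(\<Sum>t\<in>I. colf m A t) = 0"
    proof (rule ext)
      fix i
      show "(\<Sum>t\<in>I. colf m A t) i = 0 i"
      proof (cases "i < m")
        case False then show ?thesis by (simp add: bv_sum_apply colf_def)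
      next
        case True
        have "(\<Sum>t\<in>I. colf m A t) i = (\<Sum>t\<in>I. col A t $ i)"
          unfolding bv_sum_apply using True Ac IJ J by (intro sum.cong) (auto simp: colf_def)
        also have "\<dots> = (\<Sum>x\<in>col A ` I. x $ i)"
          using sum.reindex[OF inj_on_subset[OF injc IJ], of "\<lambda>x. x $ i"] by simp
        also have "col A ` I = {x\<in>B. a x = 1}"
          using B(2) unfolding I_def U_def by auto
        also have "(\<Sum>x\<in>{x\<in>B. a x = 1}. x $ i) = (\<Sum>x\<in>B. a x * x $ i)"
        proof -
          have "(\<Sum>x\<in>B. a x * x $ i) = (\<Sum>x\<in>B. if a x = 1 then x $ i else 0)"
            by (rule sum.cong[OF refl]) (metis bit_not_one_iff mult_1 mult_zero_left)
          thus ?thesis using sum.inter_filter[OF B(1), of "\<lambda>x. x $ i" "\<lambda>x. a x = 1"] by simp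
        qed
        also have "\<dots> = V.lincomb a B $ i"
        proof -
          have "B \<subseteq> carrier_vec m" using B(2) Ucar by auto
          from V.lincomb_index[OF True this, of a] show ?thesis by simp
        qed
        also have "\<dots> = 0" using B(3) True by simp
        finally show ?thesis by simp
      qed
    qed
    have "colf m A ` I \<subseteq> colf m A ` J" "colf m A ` I \<noteq> {}" using IJ \<open>I \<noteq> {}\<close> by auto
    hence "\<Sum>(colf m A ` I) \<noteq> 0" using ind unfolding indep_def by blast
    moreover have "\<Sum>(colf m A ` I) = (\<Sum>t\<in>I. colf m A t)"
      using sum.reindex[OF inj_on_subset[OF inj IJ], of id] by simp
    ultimately show False using sumz by simp
  qed
  have "card U \<le> V.rank A" using V.rank_ge_card_indpt[OF Ac Usub li] .
  thus ?thesis using cardU by (simp add: rank2_def)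
qed

definition Cm :: "nat \<Rightarrow> bv set" where "Cm m = {f. \<forall>i\<ge>m. f i = 0}"

lemma Cm_sub: "Cm m \<subseteq> (\<lambda>S i. if i \<in> S then 1 else 0) ` Pow {..<m}"
proof
  fix f assume f: "f \<in> Cm m"
  have "f = (\<lambda>i. if i \<in> {i. i < m \<and> f i = 1} then 1 else 0)"
  proof (rule ext)
    fix i show "f i = (if i \<in> {i. i < m \<and> f i = 1} then 1 else 0)"
      using f by (cases "i < m") (auto simp: Cm_def)
  qed
  thus "f \<in> (\<lambda>S i. if i \<in> S then 1 else 0) ` Pow {..<m}" by (rule image_eqI) auto
qed

lemma finite_Cm: "finite (Cm m)"
  using Cm_sub finite_subset by blast

lemma card_Cm: "card (Cm m) \<le> 2 ^ m"
proof -
  have "card (Cm m) \<le> card ((\<lambda>S i. if i \<in> S then (1::bit) else 0) ` Pow {..<m})"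
    using Cm_sub by (intro card_mono) auto
  also have "\<dots> \<le> card (Pow {..<m::nat})" by (rule card_image_le) simp
  finally show ?thesis by (simp add: card_Pow)
qed

lemma colf_Cm: "colf m A j \<in> Cm m" by (simp add: colf_def Cm_def)

definition Phi :: "nat \<Rightarrow> nat \<Rightarrow> nat set \<Rightarrow> (nat \<Rightarrow> bv) \<times> (nat \<Rightarrow> nat set) \<Rightarrow> bit mat" where
  "Phi m n J x = mat m n (\<lambda>(i,j). if j \<in> J then fst x j i else (\<Sum>t\<in>snd x j. fst x t i))"

definition DJ :: "nat \<Rightarrow> nat \<Rightarrow> nat set \<Rightarrow> ((nat \<Rightarrow> bv) \<times> (nat \<Rightarrow> nat set)) set" where
  "DJ m n J = PiE J (\<lambda>_. Cm m) \<times> PiE ({..<n} - J) (\<lambda>_. Pow J)"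

lemma card_DJ:
  assumes "J \<subseteq> {..<n}"
  shows "card (DJ m n J) \<le> 2 ^ (m * card J) * 2 ^ (card J * (n - card J))"
proof -
  have fJ: "finite J" using assms finite_subset by blast
  have c1: "card (PiE J (\<lambda>_. Cm m)) \<le> 2 ^ (m * card J)"
  proof -
    have "card (PiE J (\<lambda>_. Cm m)) = card (Cm m) ^ card J" using fJ by (simp add: card_PiE)
    also have "\<dots> \<le> (2 ^ m) ^ card J" using card_Cm by (rule power_mono) simp
    finally show ?thesis by (simp add: power_mult)
  qed
  have c2: "card (PiE ({..<n} - J) (\<lambda>_. Pow J)) = 2 ^ (card J * (n - card J))"
    using fJ assms by (simp add: card_PiE card_Pow card_Diff_subset power_mult)
  show ?thesis unfolding DJ_def card_cartesian_product using c1 c2 by simp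
qed

lemma finite_DJ: "J \<subseteq> {..<n} \<Longrightarrow> finite (DJ m n J)"
  unfolding DJ_def using finite_Cm by (auto intro!: finite_PiE finite_cartesian_product dest: finite_subset)

lemma rank_decomp:
  assumes A: "A \<in> mats m n" and r: "rank2 m A \<le> r"
  shows "\<exists>J. J \<subseteq> {..<n} \<and> card J \<le> r \<and> A \<in> Phi m n J ` DJ m n J"
proof -
  let ?c = "colf m A"
  have Ac: "A \<in> carrier_mat m n" using A by (simp add: mats_def)
  obtain F where F: "F \<subseteq> ?c ` {..<n}" "indep F" "?c ` {..<n} \<subseteq> spanS F"
    using exists_basis[of "?c ` {..<n}"] by auto
  obtain J where J: "J \<subseteq> {..<n}" "inj_on ?c J" "F = ?c ` J"
    using F(1) subset_image_inj by metis
  have cardJ: "card J \<le> r" using link_rank[OF A J(1) J(2)] F(2) J(3) r by simp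
  have rep: "\<exists>I. I \<subseteq> J \<and> ?c j = (\<Sum>t\<in>I. ?c t)" if j: "j < n" for j
  proof -
    have "?c j \<in> spanS F" using F(3) j by auto
    then obtain I' where I': "I' \<subseteq> F" "?c j = \<Sum>I'" unfolding spanS_def by auto
    then obtain I where I: "I \<subseteq> J" "I' = ?c ` I" using J(3) subset_image_iff by metis
    have "\<Sum>I' = (\<Sum>t\<in>I. ?c t)"
      using I sum.reindex[OF inj_on_subset[OF J(2) I(1)], of id] by simp
    thus ?thesis using I I' by auto
  qed
  define g where "g = restrict (\<lambda>j. SOME I. I \<subseteq> J \<and> ?c j = (\<Sum>t\<in>I. ?c t)) ({..<n} - J)"
  define U where "U = restrict ?c J"
  have g: "j \<in> {..<n} - J \<Longrightarrow> g j \<subseteq> J \<and> ?c j = (\<Sum>t\<in>g j. ?c t)" for j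
    unfolding g_def using someI_ex[OF rep] by auto
  have inD: "(U, g) \<in> DJ m n J"
  proof -
    have "U \<in> PiE J (\<lambda>_. Cm m)" unfolding U_def by (simp add: restrict_PiE_iff colf_Cm)
    moreover have "g \<in> PiE ({..<n} - J) (\<lambda>_. Pow J)"
      unfolding PiE_iff using g by (simp add: g_def)
    ultimately show ?thesis unfolding DJ_def by simp
  qed
  have "Phi m n J (U, g) = A"
  proof (rule eq_matI)
    fix i j assume ij: "i < dim_row A" "j < dim_col A"
    hence i: "i < m" and jn: "j < n" using Ac by auto
    show "Phi m n J (U, g) $$ (i, j) = A $$ (i, j)"
    proof (cases "j \<in> J")
      case True
      then show ?thesis using i jn by (simp add: Phi_def U_def colf_def)
    next
      case False
      hence gj: "g j \<subseteq> J" "?c j = (\<Sum>t\<in>g j. ?c t)" using g[of j] jn by auto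
      have "Phi m n J (U, g) $$ (i, j) = (\<Sum>t\<in>g j. U t i)" using i jn False by (simp add: Phi_def)
      also have "\<dots> = (\<Sum>t\<in>g j. ?c t i)" using gj(1) by (intro sum.cong) (auto simp: U_def)
      also have "\<dots> = (\<Sum>t\<in>g j. ?c t) i" by (simp add: bv_sum_apply)
      also have "\<dots> = ?c j i" using gj(2) by simp
      also have "\<dots> = A $$ (i, j)" using i by (simp add: colf_def)
      finally show ?thesis .
    qed
  qed (use Ac in \<open>auto simp: Phi_def\<close>)
  thus ?thesis using inD J(1) cardJ by blast
qed

lemma exp_mono_aux:
  fixes d r m n :: nat
  assumes "d \<le> r" "r \<le> n" "n \<le> m"
  shows "m * d + d * (n - d) \<le> r * (m + n - r)"
proof -
  obtain a where a: "r = d + a" using assms(1) le_Suc_ex by blast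
  obtain b where b: "n = r + b" using assms(2) le_Suc_ex by blast
  obtain c where c: "m = n + c" using assms(3) le_Suc_ex by blast
  have e1: "n - d = a + b" using a b by simp
  have e2: "m + n - r = d + a + 2 * b + c" using a b c by simp
  have "r * (m + n - r) = (m * d + d * (n - d)) + (a * a + 2 * a * b + a * c)"
    unfolding e1 e2 using a b c by (simp add: algebra_simps)
  thus ?thesis by simp
qed

lemma card_Rk:
  assumes "r \<le> n" "n \<le> m"
  shows "card {A\<in>mats m n. rank2 m A \<le> r} \<le> 2 ^ n * 2 ^ (r * (m + n - r))"
proof -
  define Js where "Js = {J. J \<subseteq> {..<n} \<and> card J \<le> r}"
  have fJs: "finite Js" unfolding Js_def by auto
  have "{A\<in>mats m n. rank2 m A \<le> r} \<subseteq> (\<Union>J\<in>Js. Phi m n J ` DJ m n J)"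
  proof
    fix A assume "A \<in> {A\<in>mats m n. rank2 m A \<le> r}"
    hence "A \<in> mats m n" "rank2 m A \<le> r" by auto
    from rank_decomp[OF this] obtain J where "J \<subseteq> {..<n}" "card J \<le> r" "A \<in> Phi m n J ` DJ m n J"
      by (elim exE conjE)
    thus "A \<in> (\<Union>J\<in>Js. Phi m n J ` DJ m n J)" unfolding Js_def by blast
  qed
  hence "card {A\<in>mats m n. rank2 m A \<le> r} \<le> card (\<Union>J\<in>Js. Phi m n J ` DJ m n J)"
    using fJs finite_DJ unfolding Js_def by (intro card_mono) auto
  also have "\<dots> \<le> (\<Sum>J\<in>Js. card (Phi m n J ` DJ m n J))" by (rule card_UN_le[OF fJs])
  also have "\<dots> \<le> (\<Sum>J\<in>Js. 2 ^ (r * (m + n - r)))"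
  proof (rule sum_mono)
    fix J assume "J \<in> Js"
    hence J: "J \<subseteq> {..<n}" "card J \<le> r" by (auto simp: Js_def)
    have "card (Phi m n J ` DJ m n J) \<le> card (DJ m n J)" using finite_DJ[OF J(1)] by (rule card_image_le)
    also have "\<dots> \<le> 2 ^ (m * card J) * 2 ^ (card J * (n - card J))" by (rule card_DJ[OF J(1)])
    also have "\<dots> = 2 ^ (m * card J + card J * (n - card J))" by (simp add: power_add)
    also have "\<dots> \<le> 2 ^ (r * (m + n - r))"
      using exp_mono_aux[OF J(2) assms] by (intro power_increasing) auto
    finally show "card (Phi m n J ` DJ m n J) \<le> 2 ^ (r * (m + n - r))" .
  qed
  also have "\<dots> = card Js * 2 ^ (r * (m + n - r))" by simp
  also have "\<dots> \<le> 2 ^ n * 2 ^ (r * (m + n - r))"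
  proof -
    have "Js \<subseteq> Pow {..<n}" unfolding Js_def by auto
    hence "card Js \<le> 2 ^ n" using card_mono[of "Pow {..<n}" Js] by (simp add: card_Pow)
    thus ?thesis by simp
  qed
  finally show ?thesis .
qed

abbreviation Rk :: "nat \<Rightarrow> nat \<Rightarrow> nat \<Rightarrow> bit mat set" where
  "Rk m n r \<equiv> {A\<in>mats m n. rank2 m A \<le> r}"

lemma finite_Rk: "finite (Rk m n r)" by simp

lemma ball_sub_mats: "rank_ball m n p X \<subseteq> mats m n"
  by (auto simp: rank_ball_def)

lemma ball_card:
  assumes X: "X \<in> mats m n" and p: "0 \<le> p"
  shows "card (rank_ball m n p X) \<le> card (Rk m n (nat \<lfloor>p * real n\<rfloor>))"
proof -
  have "rank_ball m n p X \<subseteq> (\<lambda>A. X - A) ` Rk m n (nat \<lfloor>p * real n\<rfloor>)"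
  proof
    fix Z assume Z: "Z \<in> rank_ball m n p X"
    hence Zm: "Z \<in> mats m n" and rk: "real (rank2 m (X - Z)) \<le> p * real n" by (auto simp: rank_ball_def)
    have XZ: "X - Z \<in> mats m n" using X Zm by (auto simp: mats_def)
    have "rank2 m (X - Z) \<le> nat \<lfloor>p * real n\<rfloor>" using rk le_nat_floor by (metis floor_of_nat le_floor_iff nat_int of_int_of_nat_eq nat_mono)
    moreover have "Z = X - (X - Z)" using X Zm by (auto simp: mats_def intro!: eq_matI)
    ultimately show "Z \<in> (\<lambda>A. X - A) ` Rk m n (nat \<lfloor>p * real n\<rfloor>)" using XZ by blast
  qed
  hence "card (rank_ball m n p X) \<le> card ((\<lambda>A. X - A) ` Rk m n (nat \<lfloor>p * real n\<rfloor>))"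
    by (intro card_mono) auto
  also have "\<dots> \<le> card (Rk m n (nat \<lfloor>p * real n\<rfloor>))" by (rule card_image_le) simp
  finally show ?thesis .
qed

lemma code_sub_mats: "span_code m n k Y \<subseteq> mats m n"
  unfolding span_code_comb by auto

lemma comb_restrict: "comb m n k c Y = comb m n k (\<lambda>l. if l < k then c l else 0) Y"
  unfolding comb_def by (rule arg_cong[where f="mat m n"], rule ext, auto intro!: sum.cong)

lemma code_image_Cm: "span_code m n k Y = (\<lambda>c. comb m n k c Y) ` Cm k"
proof -
  have "range (\<lambda>c. comb m n k c Y) \<subseteq> (\<lambda>c. comb m n k c Y) ` Cm k"
  proof
    fix x assume "x \<in> range (\<lambda>c. comb m n k c Y)"
    then obtain c where "x = comb m n k c Y" by auto
    hence "x = comb m n k (\<lambda>l. if l < k then c l else 0) Y" using comb_restrict by simp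
    moreover have "(\<lambda>l. if l < k then c l else 0) \<in> Cm k" by (simp add: Cm_def)
    ultimately show "x \<in> (\<lambda>c. comb m n k c Y) ` Cm k" by blast
  qed
  thus ?thesis unfolding span_code_comb by auto
qed

lemma card_code: "card (span_code m n k Y) \<le> 2 ^ k"
  unfolding code_image_Cm using card_image_le[OF finite_Cm] card_Cm le_trans by blast

lemma finite_code: "finite (span_code m n k Y)"
  unfolding code_image_Cm using finite_Cm by simp

lemma close_card:
  assumes C: "C \<subseteq> mats m n" "finite C" and p: "0 \<le> p"
  shows "card {X\<in>mats m n. list_size m n p C X \<noteq> 0} \<le> card C * card (Rk m n (nat \<lfloor>p * real n\<rfloor>))"
proof -
  let ?R = "Rk m n (nat \<lfloor>p * real n\<rfloor>)"
  have "{X\<in>mats m n. list_size m n p C X \<noteq> 0} \<subseteq> (\<lambda>(Z,A). Z + A) ` (C \<times> ?R)"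
  proof
    fix X assume "X \<in> {X\<in>mats m n. list_size m n p C X \<noteq> 0}"
    hence X: "X \<in> mats m n" and ne: "rank_ball m n p X \<inter> C \<noteq> {}"
      by (auto simp: list_size_def)
    then obtain Z where Z: "Z \<in> rank_ball m n p X" "Z \<in> C" by blast
    hence Zm: "Z \<in> mats m n" and rk: "real (rank2 m (X - Z)) \<le> p * real n" by (auto simp: rank_ball_def)
    have XZ: "X - Z \<in> mats m n" using X Zm by (auto simp: mats_def)
    have "rank2 m (X - Z) \<le> nat \<lfloor>p * real n\<rfloor>" using rk by (metis floor_of_nat le_floor_iff nat_int of_int_of_nat_eq nat_mono)
    moreover have "X = Z + (X - Z)" using X Zm by (auto simp: mats_def intro!: eq_matI)
    ultimately show "X \<in> (\<lambda>(Z,A). Z + A) ` (C \<times> ?R)" using XZ Z(2)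
      by (intro image_eqI[where x="(Z, X - Z)"]) auto
  qed
  hence "card {X\<in>mats m n. list_size m n p C X \<noteq> 0} \<le> card ((\<lambda>(Z,A). Z + A) ` (C \<times> ?R))"
    using C by (intro card_mono) auto
  also have "\<dots> \<le> card (C \<times> ?R)" by (rule card_image_le) (use C in simp)
  finally show ?thesis by (simp add: card_cartesian_product)
qed

definition Fam :: "nat \<Rightarrow> nat \<Rightarrow> bv set set" where
  "Fam k l = {F. F \<subseteq> Cm k \<and> indep F \<and> card F = l}"

lemma finite_Fam: "finite (Fam k l)"
proof -
  have "Fam k l \<subseteq> Pow (Cm k)" by (auto simp: Fam_def)
  thus ?thesis using finite_Cm finite_subset by blast
qed

lemma card_Fam: "card (Fam k l) \<le> 2 ^ (k * l)"
proof -
  have "Fam k l \<subseteq> {F. F \<subseteq> Cm k \<and> card F = l}" by (auto simp: Fam_def)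
  hence "card (Fam k l) \<le> card {F. F \<subseteq> Cm k \<and> card F = l}"
    using finite_Cm by (intro card_mono) auto
  also have "\<dots> = card (Cm k) choose l" using n_subsets[OF finite_Cm] .
  also have "\<dots> \<le> card (Cm k) ^ l"
  proof (cases "l \<le> card (Cm k)")
    case True then show ?thesis by (rule binomial_le_pow)
  next
    case False then show ?thesis by (simp add: binomial_eq_0)
  qed
  also have "\<dots> \<le> (2 ^ k) ^ l" using card_Cm by (rule power_mono) simp
  finally show ?thesis by (simp add: power_mult)
qed

definition ev :: "nat \<Rightarrow> nat \<Rightarrow> nat \<Rightarrow> real \<Rightarrow> bit mat \<Rightarrow> bv set \<Rightarrow> (nat \<Rightarrow> bit mat) set" where
  "ev m n k p X F = {Y\<in>gens m n k. \<forall>v\<in>F. comb m n k v Y \<in> rank_ball m n p X}"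

lemma ev_card:
  assumes X: "X \<in> mats m n" and F: "F \<in> Fam k l"
  shows "real (card (ev m n k p X F)) \<le> real (card (rank_ball m n p X)) ^ l * real (card (gens m n k)) / 2 ^ (l * (m * n))"
proof -
  let ?B = "rank_ball m n p X"
  have Fc: "F \<subseteq> Cm k" "indep F" "card F = l" using F by (auto simp: Fam_def)
  have fF: "finite F" using Fc(1) finite_Cm finite_subset by blast
  have sup: "\<forall>v\<in>F. \<forall>l\<ge>k. v l = 0" using Fc(1) by (auto simp: Cm_def)
  have fB: "finite ?B" using ball_sub_mats finite_subset by (metis finite_mats)
  have "ev m n k p X F \<subseteq> (\<Union>T\<in>PiE F (\<lambda>_. ?B). {Y\<in>gens m n k. \<forall>v\<in>F. comb m n k v Y = T v})"
  proof
    fix Y assume Y: "Y \<in> ev m n k p X F"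
    show "Y \<in> (\<Union>T\<in>PiE F (\<lambda>_. ?B). {Y\<in>gens m n k. \<forall>v\<in>F. comb m n k v Y = T v})"
      using Y unfolding ev_def by (intro UN_I[where a="restrict (\<lambda>v. comb m n k v Y) F"]) auto
  qed
  note calculation = this
  have "card (ev m n k p X F) \<le> card (\<Union>T\<in>PiE F (\<lambda>_. ?B). {Y\<in>gens m n k. \<forall>v\<in>F. comb m n k v Y = T v})"
  proof (rule card_mono[OF _ calculation])
    have sub: "(\<Union>T\<in>PiE F (\<lambda>_. ?B). {Y\<in>gens m n k. \<forall>v\<in>F. comb m n k v Y = T v}) \<subseteq> gens m n k" by (intro UN_least) auto
    show "finite (\<Union>T\<in>PiE F (\<lambda>_. ?B). {Y\<in>gens m n k. \<forall>v\<in>F. comb m n k v Y = T v})"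
      using finite_subset[OF sub finite_gens] .
  qed
  also have "\<dots> \<le> (\<Sum>T\<in>PiE F (\<lambda>_. ?B). card {Y\<in>gens m n k. \<forall>v\<in>F. comb m n k v Y = T v})"
    by (rule card_UN_le) (simp add: finite_PiE fF fB)
  finally have "real (card (ev m n k p X F)) \<le> (\<Sum>T\<in>PiE F (\<lambda>_. ?B). real (card {Y\<in>gens m n k. \<forall>v\<in>F. comb m n k v Y = T v}))"
    by (simp only: of_nat_sum[symmetric] of_nat_le_iff)
  also have "\<dots> = (\<Sum>T\<in>PiE F (\<lambda>_. ?B). real (card (gens m n k)) / 2 ^ (card F * (m * n)))"
  proof (rule sum.cong[OF refl])
    fix T assume T: "T \<in> PiE F (\<lambda>_. ?B)"
    have "\<forall>v\<in>F. T v \<in> mats m n" using T ball_sub_mats by blast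
    from unif[OF fF sup Fc(2) this] show "real (card {Y\<in>gens m n k. \<forall>v\<in>F. comb m n k v Y = T v}) = real (card (gens m n k)) / 2 ^ (card F * (m * n))" .
  qed
  also have "\<dots> = real (card ?B) ^ l * real (card (gens m n k)) / 2 ^ (l * (m * n))"
    using Fc(3) fF by (simp add: card_PiE)
  finally show ?thesis .
qed

lemma bad_sub:
  "{Y\<in>gens m n k. \<exists>X\<in>mats m n. 2 ^ l \<le> list_size m n p (span_code m n k Y) X}
    \<subseteq> (\<Union>X\<in>mats m n. \<Union>F\<in>Fam k l. ev m n k p X F)"
proof
  fix Y assume "Y \<in> {Y\<in>gens m n k. \<exists>X\<in>mats m n. 2 ^ l \<le> list_size m n p (span_code m n k Y) X}"
  then obtain X where Y: "Y \<in> gens m n k" and X: "X \<in> mats m n"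
    and big: "2 ^ l \<le> card (rank_ball m n p X \<inter> span_code m n k Y)"
    by (auto simp: list_size_def)
  let ?W = "rank_ball m n p X \<inter> span_code m n k Y"
  define pre where "pre w = (SOME c. c \<in> Cm k \<and> comb m n k c Y = w)" for w
  have pre: "w \<in> ?W \<Longrightarrow> pre w \<in> Cm k \<and> comb m n k (pre w) Y = w" for w
  proof -
    assume "w \<in> ?W"
    hence "w \<in> (\<lambda>c. comb m n k c Y) ` Cm k" using code_image_Cm by auto
    hence "\<exists>c. c \<in> Cm k \<and> comb m n k c Y = w" by auto
    thus ?thesis unfolding pre_def by (rule someI_ex)
  qed
  have inj: "inj_on pre ?W" by (rule inj_onI) (metis pre)
  have fW: "finite ?W" using finite_code by blast
  have "card (pre ` ?W) = card ?W" using card_image[OF inj] .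
  hence "2 ^ l \<le> card (pre ` ?W)" using big by simp
  then obtain F where F: "F \<subseteq> pre ` ?W" "indep F" "card F = l"
    using big_has_indep[of "pre ` ?W" l] fW by auto
  have FFam: "F \<in> Fam k l" using F pre unfolding Fam_def by auto
  have "Y \<in> ev m n k p X F" unfolding ev_def using Y F(1) pre by auto
  thus "Y \<in> (\<Union>X\<in>mats m n. \<Union>F\<in>Fam k l. ev m n k p X F)" using X FFam by blast
qed

lemma prob_bad:
  assumes p: "0 \<le> p"
  shows "real (card {Y\<in>gens m n k. \<exists>X\<in>mats m n. 2 ^ l \<le> list_size m n p (span_code m n k Y) X})
     \<le> 2 ^ (m * n) * 2 ^ (k * l) * real (card (Rk m n (nat \<lfloor>p * real n\<rfloor>))) ^ l
        * real (card (gens m n k)) / 2 ^ (l * (m * n))"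
proof -
  let ?R = "real (card (Rk m n (nat \<lfloor>p * real n\<rfloor>)))"
  let ?c = "?R ^ l * real (card (gens m n k)) / 2 ^ (l * (m * n))"
  have c0: "0 \<le> ?c" by simp
  have "card {Y\<in>gens m n k. \<exists>X\<in>mats m n. 2 ^ l \<le> list_size m n p (span_code m n k Y) X}
      \<le> card (\<Union>X\<in>mats m n. \<Union>F\<in>Fam k l. ev m n k p X F)"
  proof (rule card_mono[OF _ bad_sub])
    have "(\<Union>X\<in>mats m n. \<Union>F\<in>Fam k l. ev m n k p X F) \<subseteq> gens m n k"
      unfolding ev_def by (intro UN_least) auto
    thus "finite (\<Union>X\<in>mats m n. \<Union>F\<in>Fam k l. ev m n k p X F)"
      using finite_subset finite_gens by metis
  qed
  also have "\<dots> \<le> (\<Sum>X\<in>mats m n. card (\<Union>F\<in>Fam k l. ev m n k p X F))"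
    by (rule card_UN_le) simp
  also have "\<dots> \<le> (\<Sum>X\<in>mats m n. \<Sum>F\<in>Fam k l. card (ev m n k p X F))"
    by (intro sum_mono card_UN_le finite_Fam)
  finally have "real (card {Y\<in>gens m n k. \<exists>X\<in>mats m n. 2 ^ l \<le> list_size m n p (span_code m n k Y) X})
      \<le> (\<Sum>X\<in>mats m n. \<Sum>F\<in>Fam k l. real (card (ev m n k p X F)))"
    by (simp only: of_nat_sum[symmetric] of_nat_le_iff)
  also have "\<dots> \<le> (\<Sum>X\<in>mats m n. \<Sum>F\<in>Fam k l. ?c)"
  proof (intro sum_mono)
    fix X F assume X: "X \<in> mats m n" and F: "F \<in> Fam k l"
    have "real (card (ev m n k p X F)) \<le> real (card (rank_ball m n p X)) ^ l * real (card (gens m n k)) / 2 ^ (l * (m * n))"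
      by (rule ev_card[OF X F])
    also have "\<dots> \<le> ?c"
      using ball_card[OF X p] by (intro divide_right_mono mult_right_mono power_mono) auto
    finally show "real (card (ev m n k p X F)) \<le> ?c" .
  qed
  also have "\<dots> = real (card (mats m n)) * real (card (Fam k l)) * ?c" by simp
  also have "\<dots> \<le> 2 ^ (m * n) * 2 ^ (k * l) * ?c"
  proof -
    have "real (card (Fam k l)) \<le> 2 ^ (k * l)" using card_Fam[of k l] by (metis of_nat_le_iff of_nat_numeral of_nat_power)
    hence "real (card (mats m n)) * real (card (Fam k l)) \<le> 2 ^ (m * n) * 2 ^ (k * l)"
      by (simp add: card_mats)
    from mult_right_mono[OF this c0] show ?thesis .
  qed
  finally show ?thesis by (simp add: mult.assoc)
qed

lemma good_S:
  assumes C: "C \<subseteq> mats m n" "finite C" and p: "0 \<le> p" and e: "0 < \<epsilon>"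
    and good: "\<forall>X\<in>mats m n. list_size m n p C X < 2 ^ l"
  shows "S_C m n p \<epsilon> C \<le> 1 + 2 powr (\<epsilon> * real n * 2 ^ l) * real (card C)
            * real (card (Rk m n (nat \<lfloor>p * real n\<rfloor>))) / 2 ^ (m * n)"
proof -
  let ?M = "2 powr (\<epsilon> * real n * 2 ^ l)"
  let ?Z = "{X\<in>mats m n. list_size m n p C X \<noteq> 0}"
  have bnd: "A_C m n p \<epsilon> C X \<le> 1 + (if X \<in> ?Z then ?M else 0)" if X: "X \<in> mats m n" for X
  proof (cases "list_size m n p C X = 0")
    case True then show ?thesis by (simp add: A_C_def)
  next
    case False
    have L: "real (list_size m n p C X) \<le> 2 ^ l" using good X
      by (metis less_imp_le of_nat_le_iff of_nat_numeral of_nat_power)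
    have e1: "\<epsilon> / (1 + \<epsilon>) \<le> \<epsilon>" using e by (simp add: divide_simps)
    have "\<epsilon> / (1 + \<epsilon>) * real n * real (list_size m n p C X) \<le> \<epsilon> * real n * 2 ^ l"
      using e1 L e by (intro mult_mono) auto
    hence "A_C m n p \<epsilon> C X \<le> ?M" unfolding A_C_def by (intro powr_mono) auto
    thus ?thesis using False X by simp
  qed
  have "(\<Sum>X\<in>mats m n. A_C m n p \<epsilon> C X) \<le> (\<Sum>X\<in>mats m n. 1 + (if X \<in> ?Z then ?M else 0))"
    using bnd by (intro sum_mono) auto
  also have "\<dots> = real (card (mats m n)) + ?M * real (card ?Z)"
  proof -
    have "(\<Sum>X\<in>mats m n. (if X \<in> ?Z then ?M else 0)) = (\<Sum>X\<in>?Z. ?M)"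
      by (rule sum.mono_neutral_cong_right) auto
    thus ?thesis by (simp add: sum.distrib)
  qed
  also have "\<dots> \<le> real (card (mats m n)) + ?M * (real (card C) * real (card (Rk m n (nat \<lfloor>p * real n\<rfloor>))))"
    using close_card[OF C p] by (intro add_left_mono mult_left_mono) (simp_all only: of_nat_mult[symmetric] of_nat_le_iff, simp)
  finally have S: "(\<Sum>X\<in>mats m n. A_C m n p \<epsilon> C X) \<le> \<dots>" .
  have Q: "real (card (mats m n)) = 2 ^ (m * n)" by (simp add: card_mats)
  show ?thesis unfolding S_C_def using S by (simp add: Q divide_simps mult.assoc)
qed

lemma num_exp:
  fixes p \<epsilon> :: real and m n k :: nat
  assumes p: "0 < p" "p < 1" and mn: "0 < n" "n < m"
    and k: "real k = ((1 - p) * (1 - (real n / real m) * p) - \<epsilon>) * real m * real n"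
  shows "real k + real n + real (nat \<lfloor>p * real n\<rfloor> * (m + n - nat \<lfloor>p * real n\<rfloor>))
         \<le> real n - \<epsilon> * real m * real n + real m * real n"
proof -
  define r where "r = nat \<lfloor>p * real n\<rfloor>"
  define y where "y = p * real n"
  have y0: "0 \<le> y" "y \<le> real n" using p unfolding y_def by (auto simp: mult_left_le_one_le)
  have rx: "real r \<le> y" "0 \<le> real r" unfolding r_def y_def using p by auto
  have rn: "r \<le> m + n" using rx y0 mn by linarith
  have e1: "real (r * (m + n - r)) = real r * (real m + real n - real r)" using rn by (simp add: of_nat_diff)
  have "y * (real m + real n - y) - real r * (real m + real n - real r) = (y - real r) * (real m + real n - y - real r)"
    by (simp add: algebra_simps)
  moreover have "0 \<le> (y - real r) * (real m + real n - y - real r)"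
    using rx y0 mn by (intro mult_nonneg_nonneg) auto
  ultimately have e2: "real (r * (m + n - r)) \<le> y * (real m + real n - y)" using e1 by linarith
  have mpos: "real m > 0" using mn by simp
  have h: "(1 - (real n / real m) * p) * real m = real m - real n * p" using mpos by (simp add: field_simps)
  have gen: "((1 - p) * t - \<epsilon>) * a * b = (1 - p) * (t * a) * b - \<epsilon> * a * b" for t a b :: real
    by (simp add: algebra_simps)
  have "real k = (1 - p) * (real m - real n * p) * real n - \<epsilon> * real m * real n"
    using k unfolding gen h .
  hence "real k = real m * real n - p * real m * real n - p * real n * real n + p * p * real n * real n - \<epsilon> * real m * real n"
    by (simp add: algebra_simps)
  hence "real k + y * (real m + real n - y) = real m * real n - \<epsilon> * real m * real n"
    unfolding y_def by (simp add: algebra_simps)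
  thus ?thesis using e2 unfolding r_def by linarith
qed

lemma card_Rk_real:
  assumes p: "0 < p" "p < 1" and mn: "n \<le> m"
  shows "real (card (Rk m n (nat \<lfloor>p * real n\<rfloor>)))
     \<le> 2 powr (real n + real (nat \<lfloor>p * real n\<rfloor> * (m + n - nat \<lfloor>p * real n\<rfloor>)))"
proof -
  have rn: "nat \<lfloor>p * real n\<rfloor> \<le> n"
  proof -
    have "p * real n \<le> real n" using p by (simp add: mult_left_le_one_le)
    hence "\<lfloor>p * real n\<rfloor> \<le> int n" using floor_mono[of "p * real n" "real n"] by simp
    thus ?thesis by (simp add: nat_le_iff)
  qed
  have c: "card (Rk m n (nat \<lfloor>p * real n\<rfloor>)) \<le> 2 ^ n * 2 ^ (nat \<lfloor>p * real n\<rfloor> * (m + n - nat \<lfloor>p * real n\<rfloor>))"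
    by (rule card_Rk[OF rn mn])
  have "real (card (Rk m n (nat \<lfloor>p * real n\<rfloor>))) \<le> 2 ^ n * 2 ^ (nat \<lfloor>p * real n\<rfloor> * (m + n - nat \<lfloor>p * real n\<rfloor>))"
  proof -
    have "real (card (Rk m n (nat \<lfloor>p * real n\<rfloor>))) \<le> real (2 ^ n * 2 ^ (nat \<lfloor>p * real n\<rfloor> * (m + n - nat \<lfloor>p * real n\<rfloor>)))"
      by (simp only: of_nat_le_iff c)
    also have "\<dots> = 2 ^ n * 2 ^ (nat \<lfloor>p * real n\<rfloor> * (m + n - nat \<lfloor>p * real n\<rfloor>))"
      by (simp only: of_nat_mult of_nat_power of_nat_numeral)
    finally show ?thesis .
  qed
  also have "\<dots> = 2 powr (real n + real (nat \<lfloor>p * real n\<rfloor> * (m + n - nat \<lfloor>p * real n\<rfloor>)))"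
    by (simp add: powr_add powr_realpow del: of_nat_mult)
  finally show ?thesis .
qed

lemma E1:
  fixes e n m l :: real
  assumes e: "0 < e" and n: "0 < n" and m: "n \<le> m" "1 \<le> m" and en: "3 \<le> e * n" and l: "4 / e \<le> l"
  shows "m * n + l * (n - e * m * n) \<le> - n"
proof -
  have em: "3 \<le> e * m" using en m e by (smt (verit) mult_left_mono)
  have "1 * n \<le> (e * m) * n" using em n by (intro mult_right_mono) auto
  hence d: "n - e * m * n \<le> 0" by simp
  have "l * (n - e * m * n) \<le> (4 / e) * (n - e * m * n)" using mult_right_mono_neg[OF l d] .
  also have "\<dots> = 4 * n / e - 4 * m * n" using e by (simp add: field_simps)
  also have "4 * n / e \<le> 4 * m * n / 3"
  proof -
    have "1 / e \<le> m / 3" using em e by (simp add: field_simps)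
    hence "4 * n * (1 / e) \<le> 4 * n * (m / 3)" using n by (intro mult_left_mono) auto
    thus ?thesis by (simp add: algebra_simps)
  qed
  finally have "l * (n - e * m * n) \<le> 4 * m * n / 3 - 4 * m * n" by simp
  hence "l * (n - e * m * n) \<le> - (8/3) * (m * n)" by (simp add: algebra_simps)
  moreover have "n \<le> m * n" using m n by (simp add: mult_le_cancel_right1)
  ultimately show ?thesis using n by linarith
qed

lemma E2:
  fixes e n m L :: real
  assumes e: "0 < e" and n: "0 \<le> n" and m: "L + 3 / e \<le> m"
  shows "e * n * L + n - e * m * n \<le> 0"
proof -
  have "e * n * (L + 3 / e) \<le> e * n * m" using m e n by (intro mult_left_mono) auto
  also have "e * n * (L + 3 / e) = e * n * L + 3 * n" using e by (simp add: field_simps)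
  finally show ?thesis using n by (simp add: algebra_simps)
qed

theorem lemma5:
  fixes p \<epsilon> :: real
  assumes "0 < p" "p < 1" "0 < \<epsilon>"
  shows "\<exists>c>0. \<exists>N::nat. \<forall>m n k :: nat.
           N \<le> n \<longrightarrow> n < m \<longrightarrow>
           real k = ((1 - p) * (1 - (real n / real m) * p) - \<epsilon>) * real m * real n \<longrightarrow>
           rlc_prob m n k (\<lambda>C. S_C m n p \<epsilon> C \<le> 2) \<ge> 1 - exp (- c * real n)"
proof -
  have p: "0 < p" "p < 1" and e: "0 < \<epsilon>" using assms by auto
  define l where "l = nat \<lceil>4 / \<epsilon>\<rceil>"
  define N where "N = nat \<lceil>2 ^ l + 3 / \<epsilon>\<rceil>"
  have lge: "4 / \<epsilon> \<le> real l" unfolding l_def by linarith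
  have Nge: "2 ^ l + 3 / \<epsilon> \<le> real N" unfolding N_def by linarith
  have main: "rlc_prob m n k (\<lambda>C. S_C m n p \<epsilon> C \<le> 2) \<ge> 1 - exp (- ln 2 * real n)"
    if nN: "N \<le> n" and nm: "n < m"
      and k: "real k = ((1 - p) * (1 - (real n / real m) * p) - \<epsilon>) * real m * real n" for m n k :: nat
  proof -
    have nge: "2 ^ l + 3 / \<epsilon> \<le> real n" using Nge nN by (smt (verit) of_nat_le_iff)
    have pos2: "(1::real) \<le> 2 ^ l" by simp
    have e3: "3 / \<epsilon> > 0" using e by simp
    have npos: "0 < n" using nge pos2 e3 by linarith
    have en3: "3 \<le> \<epsilon> * real n"
    proof -
      have "3 / \<epsilon> \<le> real n" using nge pos2 by linarith
      hence "\<epsilon> * (3 / \<epsilon>) \<le> \<epsilon> * real n" using e by (intro mult_left_mono) auto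
      thus ?thesis using e by simp
    qed
    have mge: "2 ^ l + 3 / \<epsilon> \<le> real m" using nge nm by linarith
    define R where "R = real (card (Rk m n (nat \<lfloor>p * real n\<rfloor>)))"
    define G where "G = real (card (gens m n k))"
    define Q where "Q = (2::real) ^ (m * n)"
    define \<beta> where "\<beta> = 2 powr (real n - \<epsilon> * real m * real n)"
    have Gpos: "0 < G" unfolding G_def using card_gens[of m n k] card_mats[of m n] by simp
    have Qpos: "0 < Q" unfolding Q_def by simp
    have Qpow: "Q = 2 powr (real m * real n)" unfolding Q_def by (simp add: powr_realpow[symmetric])
    have R0: "0 \<le> R" unfolding R_def by simp
    have key: "2 ^ k * R \<le> \<beta> * Q"
    proof -
      have "R \<le> 2 powr (real n + real (nat \<lfloor>p * real n\<rfloor> * (m + n - nat \<lfloor>p * real n\<rfloor>)))"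
        unfolding R_def using card_Rk_real[OF p, of n m] nm by simp
      hence "2 ^ k * R \<le> 2 powr (real k) * 2 powr (real n + real (nat \<lfloor>p * real n\<rfloor> * (m + n - nat \<lfloor>p * real n\<rfloor>)))"
        by (simp add: powr_realpow)
      also have "\<dots> = 2 powr (real k + real n + real (nat \<lfloor>p * real n\<rfloor> * (m + n - nat \<lfloor>p * real n\<rfloor>)))"
        by (simp add: powr_add[symmetric] add.assoc)
      also have "\<dots> \<le> 2 powr (real n - \<epsilon> * real m * real n + real m * real n)"
        using num_exp[OF p npos nm k] by (intro powr_mono) auto
      also have "\<dots> = \<beta> * Q" unfolding \<beta>_def Qpow by (simp add: powr_add)
      finally show ?thesis .
    qed
    have key': "2 ^ k * R / Q \<le> \<beta>" using key Qpos by (simp add: divide_simps)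
    define Bd where "Bd = {Y\<in>gens m n k. \<exists>X\<in>mats m n. 2 ^ l \<le> list_size m n p (span_code m n k Y) X}"
    have bad: "real (card Bd) \<le> 2 powr (- real n) * G"
    proof -
      have "real (card Bd) \<le> Q * 2 ^ (k * l) * R ^ l * G / 2 ^ (l * (m * n))"
        using prob_bad[OF less_imp_le[OF p(1)], of m n k l] unfolding Bd_def R_def G_def Q_def .
      also have "\<dots> = Q * (2 ^ k * R / Q) ^ l * G"
      proof -
        have e1: "(2::real) ^ (k * l) = (2 ^ k) ^ l" by (simp add: power_mult)
        have e2: "(2::real) ^ (l * (m * n)) = Q ^ l" unfolding Q_def by (metis power_mult mult.commute)
        show ?thesis unfolding e1 e2 by (simp add: power_divide power_mult_distrib)
      qed
      also have "\<dots> \<le> Q * \<beta> ^ l * G"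
        using key' R0 Qpos Gpos by (intro mult_right_mono mult_left_mono power_mono) auto
      also have "Q * \<beta> ^ l = 2 powr (real m * real n + real l * (real n - \<epsilon> * real m * real n))"
      proof -
        have "\<beta> ^ l = 2 powr (real l * (real n - \<epsilon> * real m * real n))"
          unfolding \<beta>_def by (rule powr_power) simp
        thus ?thesis unfolding Qpow by (simp add: powr_add[symmetric] mult.commute)
      qed
      also have "\<dots> \<le> 2 powr (- real n)"
      proof (rule powr_mono)
        show "real m * real n + real l * (real n - \<epsilon> * real m * real n) \<le> - real n"
          using E1[OF e, of "real n" "real m" "real l"] npos nm en3 lge by simp
      qed simp
      finally show ?thesis using Gpos by (simp add: mult_right_mono)
    qed
    have good: "S_C m n p \<epsilon> (span_code m n k Y) \<le> 2" if Y: "Y \<in> gens m n k" "Y \<notin> Bd" for Y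
    proof -
      let ?C = "span_code m n k Y"
      have gd: "\<forall>X\<in>mats m n. list_size m n p ?C X < 2 ^ l" using Y unfolding Bd_def by auto
      have "S_C m n p \<epsilon> ?C \<le> 1 + 2 powr (\<epsilon> * real n * 2 ^ l) * real (card ?C) * R / 2 ^ (m * n)"
        unfolding R_def using good_S[OF code_sub_mats finite_code _ e gd] p by simp
      also have "\<dots> \<le> 1 + 2 powr (\<epsilon> * real n * 2 ^ l) * (2 ^ k * R / Q)"
      proof -
        have "real (card ?C) \<le> 2 ^ k" using card_code[of m n k Y]
          by (metis of_nat_le_iff of_nat_numeral of_nat_power)
        hence "real (card ?C) * R \<le> 2 ^ k * R" using R0 by (rule mult_right_mono)
        thus ?thesis unfolding Q_def by (simp add: divide_right_mono mult.assoc)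
      qed
      also have "\<dots> \<le> 1 + 2 powr (\<epsilon> * real n * 2 ^ l) * \<beta>"
        by (intro add_left_mono mult_left_mono key') simp
      also have "2 powr (\<epsilon> * real n * 2 ^ l) * \<beta> = 2 powr (\<epsilon> * real n * 2 ^ l + real n - \<epsilon> * real m * real n)"
        unfolding \<beta>_def by (simp add: powr_add[symmetric] algebra_simps)
      also have "\<dots> \<le> 2 powr 0"
        using E2[OF e _ mge, of "real n"] by (intro powr_mono) auto
      finally show ?thesis by simp
    qed
    have sub: "gens m n k - Bd \<subseteq> {Y\<in>gens m n k. S_C m n p \<epsilon> (span_code m n k Y) \<le> 2}"
      using good by auto
    have "real (card (gens m n k)) - real (card Bd) \<le> real (card (gens m n k - Bd))"
    proof -
      have "Bd \<subseteq> gens m n k" unfolding Bd_def by blast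
      hence "card (gens m n k - Bd) = card (gens m n k) - card Bd" "card Bd \<le> card (gens m n k)"
        using card_Diff_subset[of Bd "gens m n k"] card_mono[of "gens m n k" Bd] finite_subset[of Bd "gens m n k"]
        by auto
      thus ?thesis by (simp add: of_nat_diff)
    qed
    also have "\<dots> \<le> real (card {Y\<in>gens m n k. S_C m n p \<epsilon> (span_code m n k Y) \<le> 2})"
      using card_mono[OF _ sub] by simp
    finally have "G - real (card Bd) \<le> real (card {Y\<in>gens m n k. S_C m n p \<epsilon> (span_code m n k Y) \<le> 2})"
      unfolding G_def .
    hence "(G - real (card Bd)) / G \<le> rlc_prob m n k (\<lambda>C. S_C m n p \<epsilon> C \<le> 2)"
      unfolding rlc_prob_def G_def[symmetric] using Gpos by (simp add: divide_right_mono)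
    moreover have "1 - exp (- ln 2 * real n) \<le> (G - real (card Bd)) / G"
    proof -
      have "exp (- ln 2 * real n) = 2 powr (- real n)" by (simp add: powr_def)
      moreover have "real (card Bd) / G \<le> 2 powr (- real n)" using bad Gpos by (simp add: divide_simps)
      ultimately show ?thesis using Gpos by (simp add: diff_divide_distrib)
    qed
    ultimately show ?thesis by linarith
  qed
  show ?thesis
    by (rule exI[of _ "ln 2"], simp, rule exI[of _ N], use main in auto)
qed

end
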